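(* Let $\mathfrak q$ be any finite-dimensional Lie algebra over an algebraically closed field $\Bbbk$ of characteristic $0$. Then $\{\mathcal Z(\widehat{\mathfrak q},[0]),\mathcal Z(\widehat{\mathfrak q},[0])\}=0$.
   Context: $\mathfrak q[t,t^{-1}]=\mathfrak q\otimes\Bbbk[t,t^{-1}]$ is the loop algebra. Regard $S(\mathfrak q[t])$ as the quotient of $S(\mathfrak q[t,t^{-1}])$ by the ideal generated by $t^{-1}\mathfrak q[t^{-1}]$; equivalently identify $\mathfrak q[t]$ with $\mathfrak q[t,t^{-1}]/t^{-1}\mathfrak q[t^{-1}]$, giving an action of $\mathfrak q[t^{-1}]$ on $S(\mathfrak q[t])$. Then $\mathcal Z(\widehat{\mathfrak q},[0])=S(\mathfrak q[t])^{\mathfrak q[t^{-1}]}$ is the subalgebra of invariants, i.e. the $Y\in S(\mathfrak q[t])$ with $\{x,Y\}\in t^{-1}\mathfrak q[t^{-1}]\,S(\mathfrak q[t,t^{-1}])$ for all $x\in\mathfrak q[t^{-1}]$. $\{\,,\}$ denotes the Lie–Poisson bracket ($\{x,y\}=[x,y]$ on Lie algebra elements). *)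

theory Defs
  imports "HOL-Library.Poly_Mapping" "HOL-Computational_Algebra.Polynomial"
begin

definition alg_closed_field :: "'k::field itself \<Rightarrow> bool" where
  "alg_closed_field _ \<longleftrightarrow> (\<forall>p::'k poly. degree p > 0 \<longrightarrow> (\<exists>x. poly p x = 0))"

(* A Lie algebra q of dimension n with basis x_0,...,x_{n-1}, given by structure
   constants: [x_i, x_j] = sum_{k<n} c i j k * x_k. *)
definition lie_struct :: "nat \<Rightarrow> (nat \<Rightarrow> nat \<Rightarrow> nat \<Rightarrow> 'k::field) \<Rightarrow> bool" where
  "lie_struct n c \<longleftrightarrow>
     (\<forall>i<n. \<forall>j<n. \<forall>k<n. c i j k = - c j i k) \<and>
     (\<forall>i<n. \<forall>j<n. \<forall>k<n. \<forall>m<n.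
        (\<Sum>l<n. c i j l * c l k m + c j k l * c l i m + c k i l * c l j m) = 0)"

(* Polynomials in commuting variables indexed by (i, a) standing for x_i t^a:
   the polynomial ring S(V) on the vector space V with basis the variables. *)
type_synonym 'k lpoly = "((nat \<times> int) \<Rightarrow>\<^sub>0 nat) \<Rightarrow>\<^sub>0 'k"

definition Var :: "nat \<times> int \<Rightarrow> 'k::comm_ring_1 lpoly" where
  "Var v = Poly_Mapping.single (Poly_Mapping.single v 1) 1"

definition Const :: "'k::comm_ring_1 \<Rightarrow> 'k lpoly" where
  "Const a = Poly_Mapping.single 0 a"

definition vars :: "'k::comm_ring_1 lpoly \<Rightarrow> (nat \<times> int) set" where
  "vars p = (\<Union>m\<in>Poly_Mapping.keys p. Poly_Mapping.keys m)"

definition pdiff :: "nat \<times> int \<Rightarrow> 'k::comm_ring_1 lpoly \<Rightarrow> 'k lpoly" where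
  "pdiff v p = (\<Sum>m\<in>Poly_Mapping.keys p.
      Poly_Mapping.single (m - Poly_Mapping.single v 1)
        (of_nat (Poly_Mapping.lookup m v) * Poly_Mapping.lookup p m))"

definition loop_br :: "nat \<Rightarrow> (nat \<Rightarrow> nat \<Rightarrow> nat \<Rightarrow> 'k::field) \<Rightarrow> nat \<times> int \<Rightarrow> nat \<times> int \<Rightarrow> 'k lpoly" where
  "loop_br n c u w = (\<Sum>k<n. Const (c (fst u) (fst w) k) * Var (k, snd u + snd w))"

definition pbr :: "nat \<Rightarrow> (nat \<Rightarrow> nat \<Rightarrow> nat \<Rightarrow> 'k::field) \<Rightarrow> 'k lpoly \<Rightarrow> 'k lpoly \<Rightarrow> 'k lpoly" where
  "pbr n c f g = (\<Sum>u\<in>vars f. \<Sum>w\<in>vars g. pdiff u f * pdiff w g * loop_br n c u w)"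

definition S_loop :: "nat \<Rightarrow> 'k::field lpoly set" where
  "S_loop n = {p. vars p \<subseteq> {..<n} \<times> UNIV}"

definition S_pos :: "nat \<Rightarrow> 'k::field lpoly set" where
  "S_pos n = {p. vars p \<subseteq> {..<n} \<times> {0..}}"

definition lin :: "((nat \<times> int) \<Rightarrow>\<^sub>0 'k::field) \<Rightarrow> 'k lpoly" where
  "lin a = (\<Sum>v\<in>Poly_Mapping.keys a. Const (Poly_Mapping.lookup a v) * Var v)"

definition q_neg :: "nat \<Rightarrow> 'k::field lpoly set" where
  "q_neg n = {lin a | a. Poly_Mapping.keys a \<subseteq> {..<n} \<times> {..0}}"

definition ideal_gen :: "nat \<Rightarrow> 'k::field lpoly set \<Rightarrow> 'k lpoly set" where
  "ideal_gen n G = {\<Sum>g\<in>F. h g * g | F h. finite F \<and> F \<subseteq> G \<and> (\<forall>g\<in>F. h g \<in> S_loop n)}"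

definition q_negneg :: "nat \<Rightarrow> 'k::field lpoly set" where
  "q_negneg n = {lin a | a. Poly_Mapping.keys a \<subseteq> {..<n} \<times> {..<0}}"

(* Z(hat q, [0]) = S(q[t])^{q[t^-1]} *)
definition Zcrit :: "nat \<Rightarrow> (nat \<Rightarrow> nat \<Rightarrow> nat \<Rightarrow> 'k::field) \<Rightarrow> 'k lpoly set" where
  "Zcrit n c = {Y \<in> S_pos n. \<forall>x\<in>q_neg n. pbr n c x Y \<in> ideal_gen n (q_negneg n)}"

end

theory Submission
  imports Defs
begin

lemma single_induct_lp:
  assumes "P 0" "\<And>m a. P (Poly_Mapping.single m a)" "\<And>p q. P p \<Longrightarrow> P q \<Longrightarrow> P (p + q)"
  shows "P (p :: 'a \<Rightarrow>\<^sub>0 'b::comm_monoid_add)"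
proof (induction p rule: Poly_Mapping.update_induct)
  case const then show ?case using assms(1) .
next
  case (update f a b)
  have "Poly_Mapping.update a b f = f + Poly_Mapping.single a b"
    using update(1) by (intro poly_mapping_eqI) (auto simp: lookup_update lookup_add lookup_single in_keys_iff)
  then show ?case using assms(2,3) update(3) by simp
qed

lemma pdiff_sup:
  assumes "finite S" "Poly_Mapping.keys p \<subseteq> S"
  shows "pdiff v p = (\<Sum>m\<in>S. Poly_Mapping.single (m - Poly_Mapping.single v 1)
        (of_nat (Poly_Mapping.lookup m v) * Poly_Mapping.lookup p m))"
  unfolding pdiff_def using assms by (intro sum.mono_neutral_left) (auto simp: in_keys_iff)

lemma pdiff_add: "pdiff v (p + q) = pdiff v p + pdiff v q"
proof -
  let ?S = "Poly_Mapping.keys p \<union> Poly_Mapping.keys q"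
  have f: "finite ?S" by simp
  have "pdiff v (p + q) = (\<Sum>m\<in>?S. Poly_Mapping.single (m - Poly_Mapping.single v 1)
        (of_nat (Poly_Mapping.lookup m v) * Poly_Mapping.lookup (p+q) m))"
    using keys_add[of p q] by (intro pdiff_sup) auto
  also have "\<dots> = pdiff v p + pdiff v q"
    by (subst pdiff_sup[OF f, of p], blast, subst pdiff_sup[OF f, of q], blast)
       (simp add: lookup_add distrib_left single_add sum.distrib)
  finally show ?thesis .
qed

lemma pdiff_zero[simp]: "pdiff v 0 = 0"
  by (simp add: pdiff_def)

lemma pdiff_single: "pdiff v (Poly_Mapping.single m a) =
   Poly_Mapping.single (m - Poly_Mapping.single v 1) (of_nat (Poly_Mapping.lookup m v) * a)"
  by (subst pdiff_sup[of "{m}"]) auto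

lemma idx_aux:
  assumes "Poly_Mapping.lookup m1 v \<noteq> 0"
  shows "(m1 - Poly_Mapping.single v 1) + m2 = m1 + m2 - Poly_Mapping.single v (1::nat)"
  using assms by (intro poly_mapping_eqI) (auto simp: lookup_add lookup_minus lookup_single when_def)

lemma single_idx:
  "Poly_Mapping.single ((m1 - Poly_Mapping.single v 1) + m2) (of_nat (Poly_Mapping.lookup m1 v) * x)
   = Poly_Mapping.single (m1 + m2 - Poly_Mapping.single v 1) (of_nat (Poly_Mapping.lookup m1 v) * (x::'k::comm_ring_1))"
proof (cases "Poly_Mapping.lookup m1 v = 0")
  case False then show ?thesis using idx_aux[OF False, of m2] by simp
qed simp

lemma pdiff_mult_single:
  "pdiff v (Poly_Mapping.single m1 a * Poly_Mapping.single m2 b) =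
   pdiff v (Poly_Mapping.single m1 a) * Poly_Mapping.single m2 b + Poly_Mapping.single m1 a * pdiff v (Poly_Mapping.single m2 (b::'k::comm_ring_1))"
proof -
  have e1: "pdiff v (Poly_Mapping.single m1 a) * Poly_Mapping.single m2 b =
     Poly_Mapping.single (m1 + m2 - Poly_Mapping.single v 1) (of_nat (Poly_Mapping.lookup m1 v) * (a * b))"
    using single_idx[of m1 v m2 "a*b"] by (simp add: pdiff_single mult_single mult.assoc)
  have e2: "Poly_Mapping.single m1 a * pdiff v (Poly_Mapping.single m2 b) =
     Poly_Mapping.single (m1 + m2 - Poly_Mapping.single v 1) (of_nat (Poly_Mapping.lookup m2 v) * (a * b))"
    using single_idx[of m2 v m1 "a*b"] by (simp add: pdiff_single mult_single ac_simps)
  show ?thesis unfolding e1 e2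
    by (simp add: pdiff_single mult_single lookup_add single_add[symmetric] distrib_right)
qed

lemma pdiff_mult: "pdiff v (p * q) = pdiff v p * q + p * pdiff v (q::'k::comm_ring_1 lpoly)"
proof (induction p rule: single_induct_lp)
  case 1 then show ?case by simp
next
  case (2 m a)
  show ?case
  proof (induction q rule: single_induct_lp)
    case 1 then show ?case by simp
  next
    case (2 m' b) then show ?case by (rule pdiff_mult_single)
  next
    case (3 p q) then show ?case by (simp add: distrib_left distrib_right pdiff_add)
  qed
next
  case (3 p q) then show ?case by (simp add: distrib_left distrib_right pdiff_add)
qed

lemma keys_minus_nat: "Poly_Mapping.keys (m - m') \<subseteq> Poly_Mapping.keys (m::'a \<Rightarrow>\<^sub>0 nat)"
  by (auto simp: in_keys_iff lookup_minus)

lemma keys_add_nat: "Poly_Mapping.keys (m + m') = Poly_Mapping.keys (m::'a \<Rightarrow>\<^sub>0 nat) \<union> Poly_Mapping.keys m'"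
  by (auto simp: in_keys_iff lookup_add)

lemma finite_vars[simp]: "finite (vars p)"
  by (simp add: vars_def)

lemma vars_add: "vars (p + q) \<subseteq> vars p \<union> vars q"
  unfolding vars_def using keys_add[of p q] by blast

lemma vars_mult: "vars (p * q) \<subseteq> vars p \<union> vars (q::'k::comm_ring_1 lpoly)"
proof
  fix x assume "x \<in> vars (p * q)"
  then obtain m where m: "m \<in> Poly_Mapping.keys (p * q)" "x \<in> Poly_Mapping.keys m" by (auto simp: vars_def)
  then obtain a b where "m = a + b" "a \<in> Poly_Mapping.keys p" "b \<in> Poly_Mapping.keys q"
    using keys_mult[of p q] by blast
  then show "x \<in> vars p \<union> vars q" using m(2) by (auto simp: vars_def keys_add_nat)
qed

lemma vars_sum: "vars (sum f A) \<subseteq> (\<Union>a\<in>A. vars (f a))"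
  unfolding vars_def using keys_sum[of f A] by blast

lemma vars_uminus[simp]: "vars (- p) = vars p"
  by (simp add: vars_def)

lemma vars_zero[simp]: "vars 0 = {}"
  by (simp add: vars_def)

lemma vars_single: "vars (Poly_Mapping.single m a) \<subseteq> Poly_Mapping.keys m"
  by (simp add: vars_def)

lemma vars_pdiff: "vars (pdiff v p) \<subseteq> vars (p::'k::comm_ring_1 lpoly)"
proof -
  have "vars (pdiff v p) \<subseteq> (\<Union>m\<in>Poly_Mapping.keys p. vars (Poly_Mapping.single (m - Poly_Mapping.single v 1)
        (of_nat (Poly_Mapping.lookup m v) * Poly_Mapping.lookup p m)))"
    unfolding pdiff_def by (rule vars_sum)
  also have "\<dots> \<subseteq> vars p"
    using vars_single keys_minus_nat unfolding vars_def by fastforce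
  finally show ?thesis .
qed

lemma vars_Var[simp]: "vars (Var v :: 'k::comm_ring_1 lpoly) = {v}"
  by (simp add: vars_def Var_def)

lemma vars_Const[simp]: "vars (Const a) = {}"
  by (simp add: vars_def Const_def)

lemma vars_of_int[simp]: "vars (of_int a :: 'k::comm_ring_1 lpoly) = {}"
  by (metis Const_def single_of_int vars_Const)

lemma pdiff_notvar: "v \<notin> vars p \<Longrightarrow> pdiff v p = 0"
  unfolding pdiff_def vars_def by (intro sum.neutral) (auto simp: in_keys_iff)

lemma pdiff_Var: "pdiff w (Var v :: 'k::comm_ring_1 lpoly) = (if v = w then 1 else 0)"
  by (auto simp: Var_def pdiff_single lookup_single)

lemma pdiff_Const[simp]: "pdiff w (Const a :: 'k::comm_ring_1 lpoly) = 0"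
  by (simp add: Const_def pdiff_single)

lemma pdiff_uminus: "pdiff v (- p) = - pdiff v (p::'k::comm_ring_1 lpoly)"
  using pdiff_add[of v p "-p"] by (simp add: eq_neg_iff_add_eq_0 add.commute)

lemma Const_mult: "Const (a * b) = Const a * (Const b :: 'k::comm_ring_1 lpoly)"
  by (simp add: Const_def mult_single)

lemma Const_add: "Const (a + b) = Const a + (Const b :: 'k::comm_ring_1 lpoly)"
  by (simp add: Const_def single_add)

lemma Const_of_int: "Const (of_int z) = (of_int z :: 'k::comm_ring_1 lpoly)"
  by (simp add: Const_def)

lemma gen_induct_lp:
  fixes P :: "'k::comm_ring_1 lpoly \<Rightarrow> bool"
  assumes C: "\<And>a. P (Const a)" and V: "\<And>v. P (Var v)"
    and A: "\<And>p q. P p \<Longrightarrow> P q \<Longrightarrow> P (p + q)" and M: "\<And>p q. P p \<Longrightarrow> P q \<Longrightarrow> P (p * q)"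
  shows "P p"
proof -
  have Q: "\<forall>a. P (Poly_Mapping.single m a)" for m
  proof (induction m rule: single_induct_lp)
    case 1 then show ?case using C by (simp add: Const_def)
  next
    case (2 v k)
    show ?case
    proof (induction k)
      case 0 then show ?case using C by (simp add: Const_def)
    next
      case (Suc k)
      have "Poly_Mapping.single (Poly_Mapping.single v (Suc k)) a =
            Poly_Mapping.single (Poly_Mapping.single v k) a * Var v" for a :: 'k
        by (simp add: Var_def mult_single single_add[symmetric])
      then show ?case using Suc M V by simp
    qed
  next
    case (3 m1 m2)
    have "Poly_Mapping.single (m1 + m2) a = Poly_Mapping.single m1 a * Poly_Mapping.single m2 (1::'k)" for a
      by (simp add: mult_single)
    then show ?case using 3 M by simp
  qed
  show ?thesis
  proof (induction p rule: single_induct_lp)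
    case 1 then show ?case using C[of 0] by (simp add: Const_def)
  next
    case (2 m a) then show ?case using Q by simp
  next
    case (3 p q) then show ?case using A by simp
  qed
qed

definition Dl :: "(nat \<times> int \<Rightarrow> 'k::comm_ring_1 lpoly) \<Rightarrow> 'k lpoly \<Rightarrow> 'k lpoly" where
  "Dl \<phi> p = (\<Sum>v\<in>vars p. pdiff v p * \<phi> v)"

lemma Dl_sup: "finite V \<Longrightarrow> vars p \<subseteq> V \<Longrightarrow> Dl \<phi> p = (\<Sum>v\<in>V. pdiff v p * \<phi> v)"
  unfolding Dl_def by (intro sum.mono_neutral_left) (auto simp: pdiff_notvar)

lemma Dl_add: "Dl \<phi> (p + q) = Dl \<phi> p + Dl \<phi> q"
proof -
  let ?V = "vars p \<union> vars q"
  have "Dl \<phi> (p + q) = (\<Sum>v\<in>?V. pdiff v (p+q) * \<phi> v)"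
    using vars_add[of p q] by (intro Dl_sup) auto
  also have "\<dots> = Dl \<phi> p + Dl \<phi> q"
    by (subst (1 2) Dl_sup[of ?V]) (auto simp: pdiff_add distrib_right sum.distrib)
  finally show ?thesis .
qed

lemma Dl_mult: "Dl \<phi> (p * q) = Dl \<phi> p * q + p * Dl \<phi> q"
proof -
  let ?V = "vars p \<union> vars q"
  have "Dl \<phi> (p * q) = (\<Sum>v\<in>?V. pdiff v (p*q) * \<phi> v)"
    using vars_mult[of p q] by (intro Dl_sup) auto
  also have "\<dots> = (\<Sum>v\<in>?V. pdiff v p * \<phi> v * q + p * (pdiff v q * \<phi> v))"
    by (simp add: pdiff_mult algebra_simps)
  also have "\<dots> = (\<Sum>v\<in>?V. pdiff v p * \<phi> v) * q + p * (\<Sum>v\<in>?V. pdiff v q * \<phi> v)"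
    by (simp add: sum.distrib sum_distrib_left sum_distrib_right)
  also have "\<dots> = Dl \<phi> p * q + p * Dl \<phi> q"
    by (subst (1 2) Dl_sup[of ?V]) auto
  finally show ?thesis .
qed

lemma Dl_zero[simp]: "Dl \<phi> 0 = 0"
  by (simp add: Dl_def)

lemma Dl_Var[simp]: "Dl \<phi> (Var v) = \<phi> v"
  by (simp add: Dl_def pdiff_Var)

lemma Dl_Const[simp]: "Dl \<phi> (Const a) = 0"
  by (simp add: Dl_def)

lemma Dl_of_int[simp]: "Dl \<phi> (of_int a) = 0"
  by (simp add: Dl_def)

lemma Dl_uminus: "Dl \<phi> (- p) = - Dl \<phi> p"
  using Dl_add[of \<phi> p "-p"] by (simp add: eq_neg_iff_add_eq_0 add.commute)

lemma Dl_diff: "Dl \<phi> (p - q) = Dl \<phi> p - Dl \<phi> q"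
  using Dl_add[of \<phi> p "-q"] by (simp add: Dl_uminus)

lemma Dl_sum: "Dl \<phi> (sum f A) = (\<Sum>a\<in>A. Dl \<phi> (f a))"
  by (induction A rule: infinite_finite_induct) (simp_all add: Dl_add)

lemma Dl_scal: "Dl \<phi> (Const a * p) = Const a * Dl \<phi> p"
  by (simp add: Dl_mult)

lemma Dl_scal_int: "Dl \<phi> (of_int a * p) = of_int a * Dl \<phi> p"
  by (simp add: Dl_mult)

lemma Dl_fun_lin: "Dl (\<lambda>u. A u * q + p * B u) f = Dl A f * q + p * Dl B f"
proof -
  have "Dl (\<lambda>u. A u * q + p * B u) f = (\<Sum>v\<in>vars f. pdiff v f * A v * q + p * (pdiff v f * B v))"
    unfolding Dl_def by (simp add: algebra_simps)
  also have "\<dots> = Dl A f * q + p * Dl B f"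
    unfolding Dl_def by (simp add: sum.distrib sum_distrib_left sum_distrib_right)
  finally show ?thesis .
qed

lemma Dl_fun_add: "Dl (\<lambda>u. A u + B u) f = Dl A f + Dl B f"
  by (simp add: Dl_def algebra_simps sum.distrib)

lemma Dl_fun_zero[simp]: "Dl (\<lambda>u. 0) f = 0"
  by (simp add: Dl_def)

lemma vars_Dl: "vars (Dl \<phi> p) \<subseteq> vars p \<union> (\<Union>v\<in>vars p. vars (\<phi> v))"
proof -
  have "vars (Dl \<phi> p) \<subseteq> (\<Union>v\<in>vars p. vars (pdiff v p * \<phi> v))"
    unfolding Dl_def by (rule vars_sum)
  also have "\<dots> \<subseteq> vars p \<union> (\<Union>v\<in>vars p. vars (\<phi> v))"
  proof (rule UN_least)
    fix v assume "v \<in> vars p"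
    then show "vars (pdiff v p * \<phi> v) \<subseteq> vars p \<union> (\<Union>v\<in>vars p. vars (\<phi> v))"
      using vars_mult[of "pdiff v p" "\<phi> v"] vars_pdiff[of v p] by blast
  qed
  finally show ?thesis .
qed

definition br :: "nat \<Rightarrow> (nat \<Rightarrow> nat \<Rightarrow> nat \<Rightarrow> 'k::comm_ring_1) \<Rightarrow> int \<Rightarrow> nat \<times> int \<Rightarrow> nat \<times> int \<Rightarrow> 'k lpoly" where
  "br n c M u w = (\<Sum>k<n. Const (c (fst u) (fst w) k) * Var (k, snd u + snd w - M))"

definition gbr :: "nat \<Rightarrow> (nat \<Rightarrow> nat \<Rightarrow> nat \<Rightarrow> 'k::comm_ring_1) \<Rightarrow> int \<Rightarrow> 'k lpoly \<Rightarrow> 'k lpoly \<Rightarrow> 'k lpoly" where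
  "gbr n c M f g = Dl (\<lambda>u. Dl (\<lambda>w. br n c M u w) g) f"

definition Dd :: "'k::comm_ring_1 lpoly \<Rightarrow> 'k lpoly" where
  "Dd p = Dl (\<lambda>v. of_int (snd v + 1) * Var (fst v, snd v + 1)) p"

lemma pbr_gbr: "pbr n c f g = gbr n c 0 f g"
  unfolding pbr_def gbr_def Dl_def br_def loop_br_def
  by (simp add: sum_distrib_left mult.assoc)

lemma gbr_add1: "gbr n c M (p + q) g = gbr n c M p g + gbr n c M q g"
  by (simp add: gbr_def Dl_add)

lemma gbr_add2: "gbr n c M f (p + q) = gbr n c M f p + gbr n c M f q"
  by (simp add: gbr_def Dl_add Dl_fun_add)

lemma gbr_mult1: "gbr n c M (p * q) g = gbr n c M p g * q + p * gbr n c M q g"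
  by (simp add: gbr_def Dl_mult)

lemma gbr_mult2: "gbr n c M f (p * q) = gbr n c M f p * q + p * gbr n c M f q"
  by (simp add: gbr_def Dl_mult Dl_fun_lin)

lemma gbr_Const1[simp]: "gbr n c M (Const a) g = 0"
  by (simp add: gbr_def)

lemma gbr_Const2[simp]: "gbr n c M f (Const a) = 0"
  by (simp add: gbr_def)

lemma gbr_of_int1[simp]: "gbr n c M (of_int a) g = 0"
  by (simp add: gbr_def)

lemma gbr_zero1[simp]: "gbr n c M 0 g = 0"
  by (simp add: gbr_def)

lemma gbr_zero2[simp]: "gbr n c M f 0 = 0"
  by (simp add: gbr_def)

lemma gbr_Var[simp]: "gbr n c M (Var u) (Var w) = br n c M u w"
  by (simp add: gbr_def)

lemma gbr_Var1: "gbr n c M (Var u) g = Dl (\<lambda>w. br n c M u w) g"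
  by (simp add: gbr_def)

lemma Dd_add: "Dd (p + q) = Dd p + Dd q" by (simp add: Dd_def Dl_add)
lemma Dd_mult: "Dd (p * q) = Dd p * q + p * Dd q" by (simp add: Dd_def Dl_mult)
lemma Dd_Var: "Dd (Var v) = of_int (snd v + 1) * Var (fst v, snd v + 1)" by (simp add: Dd_def)
lemma Dd_Const[simp]: "Dd (Const a) = 0" by (simp add: Dd_def)
lemma Dd_zero[simp]: "Dd 0 = 0" by (simp add: Dd_def)
lemma Dd_sum: "Dd (sum f A) = (\<Sum>a\<in>A. Dd (f a))" by (simp add: Dd_def Dl_sum)
lemma Dd_diff: "Dd (p - q) = Dd p - Dd q" by (simp add: Dd_def Dl_diff)
lemma Dd_scal_int: "Dd (of_int a * p) = of_int a * Dd p" by (simp add: Dd_def Dl_scal_int)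

lemma Dd_br: "Dd (br n c M u w) = of_int (snd u + snd w - M + 1) * br n c (M - 1) u w"
  unfolding br_def Dd_sum
  by (simp add: Dd_mult Dd_Var sum_distrib_left algebra_simps)

lemma br_shift1: "br n c M (fst u, snd u + 1) w = br n c (M - 1) u w"
  unfolding br_def by (simp add: algebra_simps)

lemma br_shift2: "br n c M u (fst w, snd w + 1) = br n c (M - 1) u w"
  unfolding br_def by (simp add: algebra_simps)

lemma F4: "Dd (gbr n c M f g) = gbr n c M (Dd f) g + gbr n c M f (Dd g) - of_int (M+1) * gbr n c (M-1) f g"
proof (induction f rule: gen_induct_lp)
  case (1 a) then show ?case by simp
next
  case (2 u)
  show ?case
  proof (induction g rule: gen_induct_lp)
    case (1 a) then show ?case by (simp add: Dd_Var gbr_mult1)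
  next
    case (2 w)
    have "gbr n c M (Dd (Var u)) (Var w) = of_int (snd u + 1) * br n c (M - 1) u w"
      by (simp only: br_shift1[of n c M u w, symmetric] Dd_Var gbr_mult1 gbr_of_int1 gbr_Var mult_zero_left add_0_left)
    moreover have "gbr n c M (Var u) (Dd (Var w)) = of_int (snd w + 1) * br n c (M - 1) u w"
      by (simp only: br_shift2[of n c M u w, symmetric] Dd_Var gbr_Var1 Dl_scal_int Dl_Var)
    ultimately show ?case by (simp add: Dd_br algebra_simps)
  next
    case (3 p q) show ?case by (simp only: gbr_add2 Dd_add 3) (simp add: algebra_simps gbr_add1 gbr_add2 Dd_add)
  next
    case (4 p q)
    have "Dd (gbr n c M (Var u) (p * q)) = Dd (gbr n c M (Var u) p) * q + gbr n c M (Var u) p * Dd q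
           + Dd p * gbr n c M (Var u) q + p * Dd (gbr n c M (Var u) q)"
      by (simp add: gbr_mult2 Dd_add Dd_mult)
    then show ?case by (simp only: 4) (simp add: gbr_mult2 Dd_mult gbr_add2 algebra_simps)
  qed
next
  case (3 p q) show ?case by (simp only: gbr_add1 Dd_add 3) (simp add: algebra_simps gbr_add1 gbr_add2 Dd_add)
next
  case (4 p q)
  have "Dd (gbr n c M (p * q) g) = Dd (gbr n c M p g) * q + gbr n c M p g * Dd q
         + Dd p * gbr n c M q g + p * Dd (gbr n c M q g)"
    by (simp add: gbr_mult1 Dd_add Dd_mult)
  then show ?case by (simp only: 4) (simp add: gbr_mult1 Dd_mult gbr_add1 algebra_simps)
qed

lemma Sl_iff: "p \<in> S_loop n \<longleftrightarrow> (\<forall>v\<in>vars p. fst v < n)"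
  unfolding S_loop_def by force

lemma Sl_add: "p \<in> S_loop n \<Longrightarrow> q \<in> S_loop n \<Longrightarrow> p + q \<in> S_loop n"
  using vars_add[of p q] unfolding Sl_iff by blast

lemma Sl_mult: "p \<in> S_loop n \<Longrightarrow> q \<in> S_loop n \<Longrightarrow> p * q \<in> S_loop n"
  using vars_mult[of p q] unfolding Sl_iff by blast

lemma Sl_zero: "0 \<in> S_loop n" by (simp add: Sl_iff)
lemma Sl_Const: "Const a \<in> S_loop n" by (simp add: Sl_iff)
lemma Sl_of_int: "of_int a \<in> S_loop n" by (simp add: Sl_iff)
lemma Sl_one: "1 \<in> S_loop n" using Sl_of_int[of 1 n] by simp
lemma Sl_uminus: "p \<in> S_loop n \<Longrightarrow> - p \<in> S_loop n" by (simp add: Sl_iff)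
lemma Sl_Var: "fst v < n \<Longrightarrow> Var v \<in> S_loop n" by (simp add: Sl_iff)
lemma Sl_pdiff: "p \<in> S_loop n \<Longrightarrow> pdiff v p \<in> S_loop n"
  using vars_pdiff[of v p] unfolding Sl_iff by blast

lemma vars_Dd: "vars (Dd p) \<subseteq> vars p \<union> (\<lambda>v. (fst v, snd v + 1)) ` vars p"
proof -
  have "vars (Dd p) \<subseteq> vars p \<union> (\<Union>v\<in>vars p. vars (of_int (snd v + 1) * Var (fst v, snd v + 1) :: 'a lpoly))"
    unfolding Dd_def by (rule vars_Dl)
  also have "\<dots> \<subseteq> vars p \<union> (\<lambda>v. (fst v, snd v + 1)) ` vars p"
  proof -
    have "vars (of_int (snd v + 1) * Var (fst v, snd v + 1) :: 'a lpoly) \<subseteq> {(fst v, snd v + 1)}" for v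
      using vars_mult[of "of_int (snd v + 1) :: 'a lpoly" "Var (fst v, snd v + 1)"] unfolding vars_of_int vars_Var by simp
    then show ?thesis by blast
  qed
  finally show ?thesis .
qed

lemma Sl_Dd: "p \<in> S_loop n \<Longrightarrow> Dd p \<in> S_loop n"
  using vars_Dd[of p] unfolding Sl_iff by fastforce

lemma Sl_sum: "(\<And>a. a \<in> A \<Longrightarrow> f a \<in> S_loop n) \<Longrightarrow> sum f A \<in> S_loop n"
  using vars_sum[of f A] unfolding Sl_iff by blast

section \<open>Ideals\<close>

lemma ideal_zero: "0 \<in> ideal_gen n G"
proof -
  have "0 = (\<Sum>g\<in>{}. (\<lambda>_. 0) g * g) \<and> finite {} \<and> {} \<subseteq> G \<and> (\<forall>g\<in>{}. (\<lambda>_. 0) g \<in> S_loop n)" by simp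
  then show ?thesis unfolding ideal_gen_def by (intro CollectI exI)
qed

lemma ideal_add:
  assumes "p \<in> ideal_gen n G" "q \<in> ideal_gen n G"
  shows "p + q \<in> ideal_gen n G"
proof -
  obtain F1 h1 where 1: "p = (\<Sum>g\<in>F1. h1 g * g)" "finite F1" "F1 \<subseteq> G" "\<forall>g\<in>F1. h1 g \<in> S_loop n"
    using assms(1) unfolding ideal_gen_def by blast
  obtain F2 h2 where 2: "q = (\<Sum>g\<in>F2. h2 g * g)" "finite F2" "F2 \<subseteq> G" "\<forall>g\<in>F2. h2 g \<in> S_loop n"
    using assms(2) unfolding ideal_gen_def by blast
  define h1' where "h1' g = (if g \<in> F1 then h1 g else 0)" for g
  define h2' where "h2' g = (if g \<in> F2 then h2 g else 0)" for g
  define h where "h g = h1' g + h2' g" for g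
  have p': "p = (\<Sum>g\<in>F1 \<union> F2. h1' g * g)"
  proof -
    have "(\<Sum>g\<in>F1 \<union> F2. h1' g * g) = (\<Sum>g\<in>F1. h1' g * g)"
      using 1(2) 2(2) by (intro sum.mono_neutral_right) (auto simp: h1'_def)
    also have "\<dots> = p" unfolding 1(1) by (rule sum.cong) (auto simp: h1'_def)
    finally show ?thesis ..
  qed
  have q': "q = (\<Sum>g\<in>F1 \<union> F2. h2' g * g)"
  proof -
    have "(\<Sum>g\<in>F1 \<union> F2. h2' g * g) = (\<Sum>g\<in>F2. h2' g * g)"
      using 1(2) 2(2) by (intro sum.mono_neutral_right) (auto simp: h2'_def)
    also have "\<dots> = q" unfolding 2(1) by (rule sum.cong) (auto simp: h2'_def)
    finally show ?thesis ..
  qed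
  have e: "p + q = (\<Sum>g\<in>F1 \<union> F2. h g * g)"
    unfolding p' q' h_def by (simp add: sum.distrib distrib_right)
  have "\<forall>g\<in>F1 \<union> F2. h g \<in> S_loop n"
    using 1(4) 2(4) by (auto simp: h_def h1'_def h2'_def intro!: Sl_add Sl_zero)
  then have "p + q = (\<Sum>g\<in>F1 \<union> F2. h g * g) \<and> finite (F1 \<union> F2) \<and> F1 \<union> F2 \<subseteq> G \<and> (\<forall>g\<in>F1 \<union> F2. h g \<in> S_loop n)"
    using e 1(2,3) 2(2,3) by simp
  then show ?thesis unfolding ideal_gen_def by (intro CollectI exI)
qed

lemma ideal_mult:
  assumes "p \<in> ideal_gen n G" "r \<in> S_loop n"
  shows "r * p \<in> ideal_gen n G"
proof -
  obtain F h where 1: "p = (\<Sum>g\<in>F. h g * g)" "finite F" "F \<subseteq> G" "\<forall>g\<in>F. h g \<in> S_loop n"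
    using assms(1) unfolding ideal_gen_def by blast
  have "r * p = (\<Sum>g\<in>F. (r * h g) * g)" unfolding 1(1) by (simp add: sum_distrib_left mult.assoc)
  moreover have "\<forall>g\<in>F. r * h g \<in> S_loop n" using 1(4) assms(2) by (auto intro: Sl_mult)
  ultimately have "r * p = (\<Sum>g\<in>F. (\<lambda>g. r * h g) g * g) \<and> finite F \<and> F \<subseteq> G \<and> (\<forall>g\<in>F. (\<lambda>g. r * h g) g \<in> S_loop n)"
    using 1(2,3) by simp
  then show ?thesis unfolding ideal_gen_def by (intro CollectI exI)
qed

lemma ideal_gen_mem: "g \<in> G \<Longrightarrow> g \<in> ideal_gen n G"
proof -
  assume "g \<in> G"
  then have "g = (\<Sum>x\<in>{g}. (\<lambda>_. 1) x * x) \<and> finite {g} \<and> {g} \<subseteq> G \<and> (\<forall>x\<in>{g}. (\<lambda>_. 1) x \<in> S_loop n)"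
    by (simp add: Sl_one)
  then show ?thesis unfolding ideal_gen_def by (intro CollectI exI)
qed

lemma ideal_sum: "(\<And>a. a \<in> A \<Longrightarrow> f a \<in> ideal_gen n G) \<Longrightarrow> sum f A \<in> ideal_gen n G"
proof (induction A rule: infinite_finite_induct)
  case (infinite A) then show ?case by (simp add: ideal_zero)
next
  case empty then show ?case by (simp add: ideal_zero)
next
  case (insert x F) then show ?case by (simp add: ideal_add)
qed

lemma ideal_uminus: "p \<in> ideal_gen n G \<Longrightarrow> - p \<in> ideal_gen n G"
proof -
  assume "p \<in> ideal_gen n G"
  from ideal_mult[OF this Sl_uminus[OF Sl_one]] show ?thesis by simp
qed

lemma ideal_diff: "p \<in> ideal_gen n G \<Longrightarrow> q \<in> ideal_gen n G \<Longrightarrow> p - q \<in> ideal_gen n G"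
  by (metis ideal_add ideal_uminus diff_conv_add_uminus)

section \<open>The ideal generated by negative variables\<close>

definition Neg :: "nat \<Rightarrow> (nat \<times> int) set" where "Neg n = {..<n} \<times> {..<0}"

abbreviation Jd :: "nat \<Rightarrow> 'k::field lpoly set" where "Jd n \<equiv> ideal_gen n (Var ` Neg n)"

lemma J_Var: "fst v < n \<Longrightarrow> snd v < 0 \<Longrightarrow> Var v \<in> Jd n"
proof -
  assume "fst v < n" "snd v < 0"
  then have "v \<in> Neg n" by (simp add: Neg_def mem_Times_iff)
  then show ?thesis by (intro ideal_gen_mem imageI)
qed

lemma Var_lin: "Var v = (lin (Poly_Mapping.single v 1) :: 'k::field lpoly)"
  by (simp add: lin_def Const_def)

lemma lin_J:
  assumes "Poly_Mapping.keys a \<subseteq> {..<n} \<times> {..<0}"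
  shows "lin a \<in> (Jd n :: 'k::field lpoly set)"
  unfolding lin_def
proof (rule ideal_sum)
  fix v assume "v \<in> Poly_Mapping.keys a"
  then have "Var v \<in> (Jd n :: 'k lpoly set)" using assms by (intro J_Var) auto
  then show "Const (Poly_Mapping.lookup a v) * Var v \<in> (Jd n :: 'k lpoly set)" by (rule ideal_mult) (rule Sl_Const)
qed

lemma qnn_J: "ideal_gen n (q_negneg n) \<subseteq> (Jd n :: 'k::field lpoly set)"
proof
  fix p :: "'k lpoly" assume "p \<in> ideal_gen n (q_negneg n)"
  then obtain F h where 1: "p = (\<Sum>g\<in>F. h g * g)" "finite F" "F \<subseteq> q_negneg n" "\<forall>g\<in>F. h g \<in> S_loop n"
    unfolding ideal_gen_def by blast
  show "p \<in> Jd n" unfolding 1(1)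
  proof (rule ideal_sum)
    fix g assume g: "g \<in> F"
    then obtain a where "g = lin a" "Poly_Mapping.keys a \<subseteq> {..<n} \<times> {..<0}" using 1(3) unfolding q_negneg_def by blast
    then have "g \<in> Jd n" using lin_J by blast
    then show "h g * g \<in> Jd n" using 1(4) g by (intro ideal_mult) auto
  qed
qed

lemma J_monos:
  assumes "p \<in> (Jd n :: 'k::field lpoly set)" "m \<in> Poly_Mapping.keys p"
  shows "\<exists>v\<in>Poly_Mapping.keys m. snd v < 0"
proof -
  obtain F h where 1: "p = (\<Sum>g\<in>F. h g * g)" "finite F" "F \<subseteq> Var ` Neg n"
    using assms(1) unfolding ideal_gen_def by blast
  from assms(2) 1(1) keys_sum[of "\<lambda>g. h g * g" F] obtain g where g: "g \<in> F" "m \<in> Poly_Mapping.keys (h g * g)"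
    by blast
  then obtain v where v: "g = Var v" "v \<in> Neg n" using 1(3) by blast
  have "Poly_Mapping.keys (Var v :: 'k lpoly) = {Poly_Mapping.single v 1}" by (simp add: Var_def)
  then obtain a where "m = a + Poly_Mapping.single v 1"
    using g(2) keys_mult[of "h g" g] unfolding v(1) by auto
  then have "v \<in> Poly_Mapping.keys m" by (simp add: keys_add_nat)
  moreover have "snd v < 0" using v(2) by (auto simp: Neg_def)
  ultimately show ?thesis by blast
qed

lemma S_pos_iff: "p \<in> S_pos n \<longleftrightarrow> (\<forall>v\<in>vars p. fst v < n \<and> 0 \<le> snd v)"
  unfolding S_pos_def by force

lemma J_Spos: "p \<in> (Jd n :: 'k::field lpoly set) \<Longrightarrow> p \<in> S_pos n \<Longrightarrow> p = 0"
proof -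
  assume a: "p \<in> Jd n" "p \<in> S_pos n"
  have "Poly_Mapping.keys p = {}"
  proof (rule ccontr)
    assume "Poly_Mapping.keys p \<noteq> {}"
    then obtain m where m: "m \<in> Poly_Mapping.keys p" by blast
    then obtain v where "v \<in> Poly_Mapping.keys m" "snd v < 0" using J_monos a(1) by blast
    moreover have "v \<in> vars p" using m calculation(1) unfolding vars_def by blast
    ultimately show False using a(2) unfolding S_pos_iff by fastforce
  qed
  then show ?thesis by simp
qed

lemma Dd_Var_J: "v \<in> Neg n \<Longrightarrow> Dd (Var v) \<in> (Jd n :: 'k::field lpoly set)"
proof -
  assume v: "v \<in> Neg n"
  show ?thesis
  proof (cases "snd v + 1 < 0")
    case True
    then have "Var (fst v, snd v + 1) \<in> (Jd n :: 'k lpoly set)" using v by (intro J_Var) (auto simp: Neg_def)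
    then show ?thesis unfolding Dd_Var by (rule ideal_mult) (rule Sl_of_int)
  next
    case False
    then have "snd v + 1 = 0" using v by (auto simp: Neg_def)
    then show ?thesis unfolding Dd_Var by (simp add: ideal_zero)
  qed
qed

lemma Dd_J: "p \<in> (Jd n :: 'k::field lpoly set) \<Longrightarrow> Dd p \<in> Jd n"
proof -
  assume "p \<in> Jd n"
  then obtain F h where 1: "p = (\<Sum>g\<in>F. h g * g)" "finite F" "F \<subseteq> Var ` Neg n" "\<forall>g\<in>F. h g \<in> S_loop n"
    unfolding ideal_gen_def by blast
  show ?thesis unfolding 1(1) Dd_sum
  proof (rule ideal_sum)
    fix g assume g: "g \<in> F"
    then obtain v where v: "g = Var v" "v \<in> Neg n" using 1(3) by blast
    have gJ: "g \<in> Jd n" using v by (auto intro: ideal_gen_mem)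
    have "Dd (h g) * g \<in> Jd n"
      using ideal_mult[OF gJ Sl_Dd[of "h g" n]] 1(4) g by simp
    moreover have "h g * Dd g \<in> Jd n"
      using ideal_mult[OF Dd_Var_J[OF v(2)], of "h g"] 1(4) g v(1) by simp
    ultimately show "Dd (h g * g) \<in> Jd n" unfolding Dd_mult by (rule ideal_add)
  qed
qed

definition Zp :: "nat \<Rightarrow> (nat \<Rightarrow> nat \<Rightarrow> nat \<Rightarrow> 'k::field) \<Rightarrow> 'k lpoly set" where
  "Zp n c = {Y \<in> S_pos n. \<forall>i<n. \<forall>a\<le>0. pbr n c (Var (i, a)) Y \<in> Jd n}"

lemma Zcrit_Zp: "Y \<in> Zcrit n c \<Longrightarrow> Y \<in> Zp n c"
proof -
  assume Y: "Y \<in> Zcrit n c"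
  have "pbr n c (Var (i, a)) Y \<in> Jd n" if "i < n" "a \<le> 0" for i a
  proof -
    have "Var (i, a) \<in> (q_neg n :: 'a lpoly set)"
      unfolding q_neg_def Var_lin using that by auto
    then have "pbr n c (Var (i, a)) Y \<in> ideal_gen n (q_negneg n)"
      using Y unfolding Zcrit_def by blast
    then show ?thesis using qnn_J by blast
  qed
  then show ?thesis using Y unfolding Zp_def Zcrit_def by blast
qed

lemma Spos_Sl: "p \<in> S_pos n \<Longrightarrow> p \<in> S_loop n"
  unfolding S_pos_iff Sl_iff by blast

lemma Dd_Spos: "p \<in> S_pos n \<Longrightarrow> Dd p \<in> S_pos n"
  using vars_Dd[of p] unfolding S_pos_iff by fastforce

lemma F1: "gbr n c M f g = (\<Sum>u\<in>vars f. pdiff u f * pbr n c (Var (fst u, snd u - M)) g)"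
proof -
  have "br n c 0 (fst u, snd u - M) w = br n c M u w" for u w
    unfolding br_def by (simp add: algebra_simps)
  then have "pbr n c (Var (fst u, snd u - M)) g = Dl (\<lambda>w. br n c M u w) g" for u
    by (simp add: pbr_gbr gbr_Var1)
  then show ?thesis unfolding gbr_def Dl_def[of _ f] by simp
qed

lemma lemmaA:
  assumes "f \<in> S_pos n" "\<forall>v\<in>vars f. snd v \<le> M" "g \<in> Zp n c"
  shows "gbr n c M f g \<in> Jd n"
  unfolding F1
proof (rule ideal_sum)
  fix u assume u: "u \<in> vars f"
  then have "fst u < n" "snd u - M \<le> 0" using assms(1,2) unfolding S_pos_iff by auto
  then have "pbr n c (Var (fst u, snd u - M)) g \<in> Jd n" using assms(3) unfolding Zp_def by blast
  then show "pdiff u f * pbr n c (Var (fst u, snd u - M)) g \<in> Jd n"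
    by (rule ideal_mult) (rule Sl_pdiff[OF Spos_Sl[OF assms(1)]])
qed

lemma br_antisym:
  assumes "lie_struct n c" "fst u < n" "fst w < n"
  shows "br n c M w u = - br n c M u w"
proof -
  have "Const (c (fst w) (fst u) k) * Var (k, snd w + snd u - M) = - (Const (c (fst u) (fst w) k) * Var (k, snd u + snd w - M))"
    if "k < n" for k
  proof -
    have "c (fst w) (fst u) k = - c (fst u) (fst w) k" using assms that unfolding lie_struct_def by blast
    then show ?thesis by (simp add: Const_def single_uminus add.commute)
  qed
  then have "br n c M w u = (\<Sum>k<n. - (Const (c (fst u) (fst w) k) * Var (k, snd u + snd w - M)))"
    unfolding br_def by (intro sum.cong) auto
  then show ?thesis unfolding br_def by (simp only: sum_negf)
qed

lemma gbr_antisym: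
  assumes "lie_struct n c" "f \<in> S_loop n" "g \<in> S_loop n"
  shows "gbr n c M f g = - gbr n c M g f"
proof -
  have "gbr n c M g f = (\<Sum>w\<in>vars g. \<Sum>u\<in>vars f. pdiff w g * (pdiff u f * br n c M w u))"
    by (simp add: gbr_def Dl_def sum_distrib_left)
  also have "\<dots> = (\<Sum>u\<in>vars f. \<Sum>w\<in>vars g. pdiff w g * (pdiff u f * br n c M w u))"
    by (rule sum.swap)
  also have "\<dots> = (\<Sum>u\<in>vars f. \<Sum>w\<in>vars g. - (pdiff u f * (pdiff w g * br n c M u w)))"
  proof (intro sum.cong refl)
    fix u w assume "u \<in> vars f" "w \<in> vars g"
    then have "fst u < n" "fst w < n" using assms(2,3) unfolding Sl_iff by auto
    then have "br n c M w u = - br n c M u w" by (rule br_antisym[OF assms(1)])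
    then show "pdiff w g * (pdiff u f * br n c M w u) = - (pdiff u f * (pdiff w g * br n c M u w))"
      by (simp add: mult.left_commute)
  qed
  also have "\<dots> = - gbr n c M f g"
    unfolding gbr_def Dl_def sum_negf sum_distrib_left ..
  finally show ?thesis by simp
qed

lemma Dd_Zp:
  assumes "Y \<in> Zp n c"
  shows "Dd Y \<in> Zp n c"
proof -
  have "pbr n c (Var (i, a)) (Dd Y) \<in> Jd n" if ia: "i < n" "a \<le> 0" for i a
  proof -
    let ?x = "Var (i, a) :: 'a lpoly"
    have e1: "gbr n c 0 (Dd ?x) Y = of_int (a + 1) * pbr n c (Var (i, a + 1)) Y"
      by (simp only: Dd_Var gbr_mult1 gbr_of_int1 pbr_gbr fst_conv snd_conv) simp
    have e2: "gbr n c (-1) ?x Y = pbr n c (Var (i, a + 1)) Y"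
      using br_shift1[of n c 0 "(i, a)"] by (simp add: pbr_gbr gbr_Var1)
    have "pbr n c ?x (Dd Y) = Dd (pbr n c ?x Y) - gbr n c 0 (Dd ?x) Y + gbr n c (-1) ?x Y"
      using F4[of n c 0 ?x Y] by (simp add: pbr_gbr algebra_simps)
    also have "\<dots> = Dd (pbr n c ?x Y) + of_int (- a) * pbr n c (Var (i, a + 1)) Y"
      unfolding e1 e2 by (simp add: algebra_simps)
    finally have e: "pbr n c ?x (Dd Y) = Dd (pbr n c ?x Y) + of_int (- a) * pbr n c (Var (i, a + 1)) Y" .
    have "Dd (pbr n c ?x Y) \<in> Jd n" using assms ia unfolding Zp_def by (blast intro: Dd_J)
    moreover have "of_int (- a) * pbr n c (Var (i, a + 1)) Y \<in> Jd n"
    proof (cases "a = 0")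
      case True then show ?thesis by (simp add: ideal_zero)
    next
      case False
      then have "pbr n c (Var (i, a + 1)) Y \<in> Jd n" using assms ia unfolding Zp_def by auto
      then show ?thesis by (rule ideal_mult) (rule Sl_of_int)
    qed
    ultimately show ?thesis unfolding e by (rule ideal_add)
  qed
  then show ?thesis using assms Dd_Spos unfolding Zp_def by blast
qed

lemma vars_br: "vars (br n c M u w) \<subseteq> {v. fst v < n \<and> snd v = snd u + snd w - M}"
proof -
  have "vars (br n c M u w) \<subseteq> (\<Union>k\<in>{..<n}. vars (Const (c (fst u) (fst w) k) * Var (k, snd u + snd w - M)))"
    unfolding br_def by (rule vars_sum)
  also have "\<dots> \<subseteq> {v. fst v < n \<and> snd v = snd u + snd w - M}"
  proof (rule UN_least)
    fix k assume "k \<in> {..<n}"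
    then show "vars (Const (c (fst u) (fst w) k) * Var (k, snd u + snd w - M)) \<subseteq> {v. fst v < n \<and> snd v = snd u + snd w - M}"
      using vars_mult[of "Const (c (fst u) (fst w) k)" "Var (k, snd u + snd w - M)"] by auto
  qed
  finally show ?thesis .
qed

lemma pbr_Spos:
  assumes "f \<in> S_pos n" "g \<in> S_pos n"
  shows "gbr n c 0 f g \<in> S_pos n"
proof -
  have s1: "vars (gbr n c 0 f g) \<subseteq> vars f \<union> (\<Union>u\<in>vars f. vars (Dl (\<lambda>w. br n c 0 u w) g))"
    unfolding gbr_def by (rule vars_Dl)
  have s2: "vars (Dl (\<lambda>w. br n c 0 u w) g) \<subseteq> vars g \<union> (\<Union>w\<in>vars g. vars (br n c 0 u w))" for u
    by (rule vars_Dl)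
  have sub: "v \<in> vars f \<or> v \<in> vars g \<or> (\<exists>u\<in>vars f. \<exists>w\<in>vars g. v \<in> vars (br n c 0 u w))"
    if "v \<in> vars (gbr n c 0 f g)" for v
  proof -
    from that s1 have "v \<in> vars f \<or> (\<exists>u\<in>vars f. v \<in> vars (Dl (\<lambda>w. br n c 0 u w) g))" by blast
    then show ?thesis
    proof
      assume "\<exists>u\<in>vars f. v \<in> vars (Dl (\<lambda>w. br n c 0 u w) g)"
      then obtain u where u: "u \<in> vars f" "v \<in> vars (Dl (\<lambda>w. br n c 0 u w) g)" by blast
      then have "v \<in> vars g \<or> (\<exists>w\<in>vars g. v \<in> vars (br n c 0 u w))" using s2[of u] by blast
      then show ?thesis using u(1) by blast
    qed simp
  qed
  have "fst v < n \<and> 0 \<le> snd v" if v: "v \<in> vars (gbr n c 0 f g)" for v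
  proof -
    have "v \<in> vars f \<or> v \<in> vars g \<or> (\<exists>u\<in>vars f. \<exists>w\<in>vars g. v \<in> vars (br n c 0 u w))"
      using sub[OF v] .
    then show ?thesis
    proof (elim disjE bexE)
      assume "v \<in> vars f" then show ?thesis using assms(1) unfolding S_pos_iff by blast
    next
      assume "v \<in> vars g" then show ?thesis using assms(2) unfolding S_pos_iff by blast
    next
      fix u w assume uw: "u \<in> vars f" "w \<in> vars g" "v \<in> vars (br n c 0 u w)"
      then have "fst v < n" "snd v = snd u + snd w" using vars_br[of n c 0 u w] by auto
      moreover have "0 \<le> snd u" "0 \<le> snd w" using uw(1,2) assms unfolding S_pos_iff by auto
      ultimately show ?thesis by simp
    qed
  qed
  then show ?thesis unfolding S_pos_iff by blast
qed

lemma bound_exists: "\<exists>N::int. \<forall>v\<in>vars p. snd v \<le> N"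
proof -
  have "\<forall>v\<in>vars p. snd v \<le> Max (snd ` vars p)"
    by (intro ballI Max_ge) auto
  then show ?thesis by blast
qed
lemma main_ind:
  fixes c :: "nat \<Rightarrow> nat \<Rightarrow> nat \<Rightarrow> 'k::field_char_0"
  assumes lie: "lie_struct n c"
  shows "F \<in> Zp n c \<Longrightarrow> G \<in> Zp n c \<Longrightarrow> \<forall>v\<in>vars F. snd v \<le> NF \<Longrightarrow> \<forall>v\<in>vars G. snd v \<le> NG
    \<Longrightarrow> 0 \<le> M \<Longrightarrow> gbr n c M F G \<in> Jd n"
proof (induction "nat (NF + NG - 2 * M)" arbitrary: F G NF NG M rule: less_induct)
  case less
  have FS: "F \<in> S_pos n" and GS: "G \<in> S_pos n" using less.prems unfolding Zp_def by auto
  show ?case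
  proof (cases "NF \<le> M")
    case True
    then have "\<forall>v\<in>vars F. snd v \<le> M" using less.prems(3) by force
    then show ?thesis by (rule lemmaA[OF FS _ less.prems(2)])
  next
    case nF: False
    show ?thesis
    proof (cases "NG \<le> M")
      case True
      then have "\<forall>v\<in>vars G. snd v \<le> M" using less.prems(4) by force
      then have "gbr n c M G F \<in> Jd n" by (rule lemmaA[OF GS _ less.prems(1)])
      then show ?thesis using gbr_antisym[OF lie Spos_Sl[OF FS] Spos_Sl[OF GS]] ideal_uminus by metis
    next
      case nG: False
      have bDF: "\<forall>v\<in>vars (Dd F). snd v \<le> NF + 1" using vars_Dd[of F] less.prems(3) by fastforce
      have bDG: "\<forall>v\<in>vars (Dd G). snd v \<le> NG + 1" using vars_Dd[of G] less.prems(4) by fastforce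
      have m1: "nat (NF + 1 + NG - 2 * (M + 1)) < nat (NF + NG - 2 * M)" using nF nG by simp
      have m2: "nat (NF + (NG + 1) - 2 * (M + 1)) < nat (NF + NG - 2 * M)" using nF nG by simp
      have m3: "nat (NF + NG - 2 * (M + 1)) < nat (NF + NG - 2 * M)" using nF nG by simp
      have A: "gbr n c (M + 1) (Dd F) G \<in> Jd n"
        using less.hyps[OF m1 Dd_Zp[OF less.prems(1)] less.prems(2) bDF less.prems(4)] less.prems(5) by simp
      have B: "gbr n c (M + 1) F (Dd G) \<in> Jd n"
        using less.hyps[OF m2 less.prems(1) Dd_Zp[OF less.prems(2)] less.prems(3) bDG] less.prems(5) by simp
      have C: "gbr n c (M + 1) F G \<in> Jd n"
        using less.hyps[OF m3 less.prems(1) less.prems(2) less.prems(3) less.prems(4)] less.prems(5) by simp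
      have e: "of_int (M + 2) * gbr n c M F G = gbr n c (M + 1) (Dd F) G + gbr n c (M + 1) F (Dd G) - Dd (gbr n c (M + 1) F G)"
        using F4[of n c "M + 1" F G] by (simp add: algebra_simps)
      have K: "of_int (M + 2) * gbr n c M F G \<in> Jd n"
        unfolding e by (intro ideal_diff ideal_add A B Dd_J C)
      have nz: "(of_int (M + 2) :: 'k) \<noteq> 0" using less.prems(5) by (simp only: of_int_eq_0_iff)
      have "Const (inverse (of_int (M + 2))) * (of_int (M + 2) * gbr n c M F G) = gbr n c M F G"
      proof -
        have "Const (inverse (of_int (M + 2))) * (of_int (M + 2) :: 'k lpoly) = Const (inverse (of_int (M + 2)) * of_int (M + 2))"
          by (simp only: Const_of_int[symmetric] Const_mult)
        also have "\<dots> = 1" using nz by (simp add: Const_def)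
        finally show ?thesis by (simp add: mult.assoc[symmetric])
      qed
      then show ?thesis using ideal_mult[OF K Sl_Const] by metis
    qed
  qed
qed

theorem corollary2p3:
  fixes n :: nat and c :: "nat \<Rightarrow> nat \<Rightarrow> nat \<Rightarrow> 'k::field_char_0"
  assumes "alg_closed_field TYPE('k)"
    and "lie_struct n c"
    and "Y1 \<in> Zcrit n c" and "Y2 \<in> Zcrit n c"
  shows "pbr n c Y1 Y2 = 0"
proof -
  have Z1: "Y1 \<in> Zp n c" and Z2: "Y2 \<in> Zp n c" using assms(3,4) by (auto intro: Zcrit_Zp)
  obtain N1 where N1: "\<forall>v\<in>vars Y1. snd v \<le> N1" using bound_exists by blast
  obtain N2 where N2: "\<forall>v\<in>vars Y2. snd v \<le> N2" using bound_exists by blast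
  have J: "gbr n c 0 Y1 Y2 \<in> Jd n" using main_ind[OF assms(2) Z1 Z2 N1 N2] by simp
  have S: "gbr n c 0 Y1 Y2 \<in> S_pos n" using Z1 Z2 unfolding Zp_def by (intro pbr_Spos) auto
  show ?thesis unfolding pbr_gbr using J_Spos[OF J S] .
qed

end
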